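(* Let $p\in\mathbb R$ and consider the third order linear differential equation $$x^2R'''(x)+4xR''(x)+(2-4p^2+4x^2)R'(x)-\frac{4p^2}{x}R(x)=0.$$ It admits a unique formal solution of the form $R(x)=\frac1\pi+\frac1\pi\sum_{n\ge1}\pi^{n}d_n x^{-n}$. For this solution $d_{2n-1}=0$ for all $n\ge1$, and $d_{2n}=c_{2n}$ where $$c_2=-\frac{p^2}{2\pi^2},\qquad c_{2n}=-\frac{1}{\pi^{2n}}\frac{(2n-3)!!}{(2n)!!}\prod_{l=0}^{n-1}(p^2-l^2)\quad(n\ge2),$$ equivalently $c_{2n+2}=\frac{1}{\pi^2}\frac{2n-1}{2(n+1)}(p^2-n^2)c_{2n}$ for $n\ge1$. In particular $c_{2n}=0$ for integer $p\ge0$ and $n>p$.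
   Context: The function $R(x)=\frac1\pi\rho_{(1),\infty}(x/\pi;2,p,0)$ satisfies this differential equation, where $\rho_{(1),\infty}(x;\beta,p,q)=\lim_{N\to\infty}\frac{2\pi}{N}\rho_{(1),N}(-\pi\,\mathrm{sgn}(x)+2\pi x/N)$ is the bulk-scaled one-point density at the spectrum singularity of the generalised circular Jacobi $\beta$ ensemble (probability density on $(-\pi,\pi]^N$ proportional to $\prod_{l=1}^N e^{q\theta_l}|1+e^{i\theta_l}|^{\beta p}\prod_{j<k}|e^{i\theta_k}-e^{i\theta_j}|^\beta$, one-point density $\rho_{(1),N}$ integrating to $N$). The double factorial $(2n-3)!!$ is the product of odd integers up to $2n-3$ (with $1!!=1$), and $(2n)!!=2^n n!$. *)

theory Defs
  imports Complex_Main
begin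

text \<open>A coefficient
function a :: int => real represents the formal sum of a k * x^k over all integers k.
The series appearing below have support bounded above (exponents <= 0), so all
operations are well defined coefficientwise.\<close>

definition fderiv :: "(int \<Rightarrow> real) \<Rightarrow> int \<Rightarrow> real" where
  "fderiv a k = of_int (k + 1) * a (k + 1)"

definition xmul :: "int \<Rightarrow> (int \<Rightarrow> real) \<Rightarrow> int \<Rightarrow> real" where
  "xmul j a k = a (k - j)"

definition ode_op :: "real \<Rightarrow> (int \<Rightarrow> real) \<Rightarrow> int \<Rightarrow> real" where
  "ode_op p a k =
     xmul 2 (fderiv (fderiv (fderiv a))) k
     + 4 * xmul 1 (fderiv (fderiv a)) k
     + (2 - 4 * p^2) * fderiv a k
     + 4 * xmul 2 (fderiv a) k
     - 4 * p^2 * xmul (-1) a k"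

definition Rseries :: "(nat \<Rightarrow> real) \<Rightarrow> int \<Rightarrow> real" where
  "Rseries d k = (if k = 0 then 1 / pi
                  else if k < 0 then (1 / pi) * pi ^ nat (- k) * d (nat (- k))
                  else 0)"

definition formal_solution :: "real \<Rightarrow> (nat \<Rightarrow> real) \<Rightarrow> bool" where
  "formal_solution p d \<longleftrightarrow> (\<forall>k. ode_op p (Rseries d) k = 0)"

fun dfact :: "nat \<Rightarrow> nat" where
  "dfact 0 = 1"
| "dfact (Suc 0) = 1"
| "dfact (Suc (Suc n)) = Suc (Suc n) * dfact n"

text \<open>c_even p n stands for c_(2n) (meaningful for n >= 1).\<close>
definition c_even :: "real \<Rightarrow> nat \<Rightarrow> real" where
  "c_even p n = (if n = 1 then - (p^2) / (2 * pi^2)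
                 else - (1 / pi ^ (2 * n)) * (real (dfact (2 * n - 3)) / real (dfact (2 * n)))
                        * (\<Prod>l<n. p^2 - (real l)^2))"

end

theory Submission
  imports Defs
begin

lemma ode_op_eq: "ode_op p a k = (of_int k+2)*((of_int k+1)^2-4*p^2)*a(k+1) + 4*(of_int k-1)*a(k-1)"
  unfolding ode_op_def xmul_def fderiv_def
  by (simp add: algebra_simps power2_eq_square)

lemma Rs_neg: "n > 0 \<Longrightarrow> Rseries d (- int n) = (1/pi)*pi^n*d n"
  by (simp add: Rseries_def)
lemma Rs_0: "Rseries d 0 = 1/pi" by (simp add: Rseries_def)
lemma Rs_pos: "k > 0 \<Longrightarrow> Rseries d k = 0" by (simp add: Rseries_def)

fun dd :: "real \<Rightarrow> nat \<Rightarrow> real" where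
  "dd p 0 = 0"
| "dd p (Suc 0) = 0"
| "dd p (Suc (Suc 0)) = -(p^2)/(2*pi^2)"
| "dd p (Suc (Suc (Suc n))) = (1-real(Suc n))*(real(Suc n)^2-4*p^2)*dd p (Suc n)/(4*(real(Suc n)+2)*pi^2)"

lemma dd_sol: "formal_solution p (dd p)"
  unfolding formal_solution_def
proof
  fix k :: int
  let ?a = "Rseries (dd p)"
  have pi: "pi \<noteq> 0" by simp
  consider "k \<ge> 2" | "k = 1" | "k = 0" | "k = -1" | m where "k = - int m - 2"
  proof -
    have "k \<ge> 2 \<or> k = 1 \<or> k = 0 \<or> k = -1 \<or> k \<le> -2" by linarith
    moreover have "k \<le> -2 \<Longrightarrow> \<exists>m. k = - int m - 2" by (rule exI[of _ "nat (-k-2)"]) simp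
    ultimately show ?thesis using that by blast
  qed
  then show "ode_op p ?a k = 0"
  proof cases
    case 1 then show ?thesis by (simp add: ode_op_eq Rs_pos)
  next
    case 2 then show ?thesis by (simp add: ode_op_eq Rs_pos)
  next
    case 3
    have "?a (-1) = 0" using Rs_neg[of 1 "dd p"] by simp
    then show ?thesis using 3 by (simp add: ode_op_eq Rs_pos)
  next
    case 4
    have "?a (-2) = (1/pi)*pi^2*dd p 2" using Rs_neg[of 2 "dd p"] by simp
    also have "\<dots> = -(p^2)/(2*pi)" by (simp add: numeral_2_eq_2 power2_eq_square)
    finally have e: "?a (-2) = -(p^2)/(2*pi)" .
    show ?thesis using 4 by (simp add: ode_op_eq Rs_0 e field_simps)
  next
    case 5
    have e1: "?a (k+1) = (1/pi)*pi^(m+1)*dd p (m+1)"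
    proof -
      have eq: "k+1 = - int (m+1)" using 5 by simp
      have r: "Rseries (dd p) (- int (m+1)) = (1/pi)*pi^(m+1)*dd p (m+1)" by (rule Rs_neg) simp
      show ?thesis by (simp only: eq r)
    qed
    have e2: "?a (k-1) = (1/pi)*pi^(m+3)*dd p (m+3)"
    proof -
      have eq: "k-1 = - int (m+3)" using 5 by simp
      have r: "Rseries (dd p) (- int (m+3)) = (1/pi)*pi^(m+3)*dd p (m+3)" by (rule Rs_neg) simp
      show ?thesis by (simp only: eq r)
    qed
    have e3: "dd p (m+3) = (1-real(m+1))*(real(m+1)^2-4*p^2)*dd p (m+1)/(4*(real(m+1)+2)*pi^2)"
      by (simp add: numeral_3_eq_3)
    have kk: "real_of_int k = - real m - 2" using 5 by simp
    have p1: "(1/pi)*pi^(m+1) = pi^m" by simp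
    have p3: "(1/pi)*pi^(m+3) = pi^m * pi^2" by (simp add: power_add numeral_3_eq_3 power2_eq_square)
    have m3: "4*(real(m+1)+2)*pi^2 \<noteq> 0" by simp
    have "ode_op p ?a k = (- real m)*((- real m - 1)^2-4*p^2)*(pi^m*dd p (m+1))
        + 4*(- real m - 3)*(pi^m*pi^2)*((1-real(m+1))*(real(m+1)^2-4*p^2)*dd p (m+1)/(4*(real(m+1)+2)*pi^2))"
      unfolding ode_op_eq e1 e2 e3 kk mult.assoc[symmetric] p1 p3
      by (simp add: algebra_simps power2_eq_square)
    also have "\<dots> = 0" using m3 by (simp add: field_simps) (simp add: algebra_simps power2_eq_square)
    finally show ?thesis .
  qed
qed

lemma sol_rec:
  assumes "formal_solution p d"
  shows "d 1 = 0" "d 2 = -(p^2)/(2*pi^2)"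
    "n \<ge> 1 \<Longrightarrow> d (n+2) = (1-real n)*(real n^2-4*p^2)*d n/(4*(real n+2)*pi^2)"
proof -
  have E: "\<And>k. (of_int k+2)*((of_int k+1)^2-4*p^2)*Rseries d (k+1) + 4*(of_int k-1)*Rseries d (k-1) = 0"
    using assms unfolding formal_solution_def ode_op_eq by blast
  have pi: "pi > 0" by simp
  have "Rseries d (-1) = 0" using E[of 0] by (simp add: Rs_pos)
  then show d1: "d 1 = 0" using Rs_neg[of 1 d] by simp
  have "Rseries d (-2) = -(p^2)/(2*pi)" using E[of "-1"] by (simp add: Rs_0 field_simps)
  then show "d 2 = -(p^2)/(2*pi^2)" using Rs_neg[of 2 d] pi
    by (simp add: field_simps power2_eq_square)
  assume n: "n \<ge> 1"
  have e1: "Rseries d (- int n) = (1/pi)*pi^n*d n" using Rs_neg[of n d] n by simp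
  have e2: "Rseries d (- int n - 2) = (1/pi)*pi^(n+2)*d (n+2)"
    using Rs_neg[of "n+2" d] by (simp add: algebra_simps)
  have "(- int n + 1)*((-real n)^2-4*p^2)*Rseries d (- int n) + 4*(-real n-2)*Rseries d (- int n - 2) = 0"
    using E[of "- int n - 1"] by (simp add: algebra_simps)
  then have "(- real n + 1)*((real n)^2-4*p^2)*(pi^n*d n) + 4*(-real n-2)*(pi^(n+2)*d (n+2)) = 0"
    unfolding e1 e2 using pi by (simp add: field_simps)
  then have "pi^n * ((- real n + 1)*((real n)^2-4*p^2)*d n + 4*(-real n-2)*(pi^2*d (n+2))) = 0"
    by (simp add: power_add algebra_simps power2_eq_square)
  then have "(- real n + 1)*((real n)^2-4*p^2)*d n + 4*(-real n-2)*(pi^2*d (n+2)) = 0"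
    by simp
  then have "d (n+2) * (4*(real n+2)*pi^2) = (1-real n)*(real n^2-4*p^2)*d n"
    by (simp add: algebra_simps)
  moreover have "4*(real n+2)*pi^2 \<noteq> 0" by simp
  ultimately show "d (n+2) = (1-real n)*(real n^2-4*p^2)*d n/(4*(real n+2)*pi^2)"
    by (simp add: eq_divide_eq)
qed

lemma dfact_pos: "dfact k > 0" by (induction k rule: dfact.induct) auto

lemma c_rec_aux:
  fixes A B P q x y :: real
  assumes "B \<noteq> 0" "x \<noteq> 0" "y > 0"
  shows "- (1 / (x * y)) * ((2*real n - 1) * A / ((2*real n+2) * B)) * (P * q)
     = (1 / x) * ((2 * real n - 1) / (2 * (real n + 1))) * q * (- (1 / y) * (A / B) * P)"
  using assms by (simp add: field_simps)

lemma c_rec: "n \<ge> 1 \<Longrightarrow> c_even p (n + 1) = (1 / pi^2) * ((2 * real n - 1) / (2 * (real n + 1)))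
                                   * (p^2 - (real n)^2) * c_even p n"
proof (cases "n = 1")
  case True
  have d4: "dfact 4 = 8" by (simp add: numeral_eq_Suc)
  have d1: "dfact (2*2-3) = 1" by (simp add: numeral_eq_Suc)
  have pr: "(\<Prod>l<2. p^2 - (real l)^2) = p^2 * (p^2 - 1)" by (simp add: numeral_2_eq_2)
  have "c_even p 2 = - (1 / pi ^ 4) * (1 / 8) * (p^2 * (p^2 - 1))"
    unfolding c_even_def using d4 d1 pr by simp
  then show ?thesis using True
    by (simp add: c_even_def field_simps power2_eq_square)
next
  case False
  assume "n \<ge> 1"
  then have n2: "n \<ge> 2" using False by simp
  then obtain m where m: "n = m + 2" by (metis le_add_diff_inverse2)
  have f1: "dfact (2*(n+1) - 3) = (2*n-1) * dfact (2*n-3)"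
  proof -
    have "2*(n+1) - 3 = Suc (Suc (2*m+1))" "2*n-3 = 2*m+1" "2*n-1 = 2*m+3" using m by auto
    then show ?thesis by (simp only: dfact.simps) (simp add: algebra_simps)
  qed
  have f2: "dfact (2*(n+1)) = (2*n+2) * dfact (2*n)"
  proof -
    have "2*(n+1) = Suc (Suc (2*n))" by simp
    then show ?thesis by (simp only: dfact.simps) simp
  qed
  have pr: "(\<Prod>l<n+1. p^2 - (real l)^2) = (\<Prod>l<n. p^2 - (real l)^2) * (p^2 - (real n)^2)" by simp
  have pw: "pi ^ (2*(n+1)) = pi^2 * pi^(2*n)" by (simp add: power_add power2_eq_square)
  have r1: "real (2*n-1) = 2 * real n - 1" using n2 by (simp add: of_nat_diff)
  have e1: "c_even p (n+1) = - (1 / (pi^2 * pi^(2*n))) * ((2*real n - 1) * real (dfact (2*n-3)) / ((2*real n+2) * real (dfact (2*n))))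
      * ((\<Prod>l<n. p^2 - (real l)^2) * (p^2 - (real n)^2))"
    unfolding c_even_def using n2 by (simp only: f1 f2 pr pw r1 of_nat_mult) simp
  have e2: "c_even p n = - (1 / pi ^ (2 * n)) * (real (dfact (2 * n - 3)) / real (dfact (2 * n)))
                        * (\<Prod>l<n. p^2 - (real l)^2)" unfolding c_even_def using n2 by simp
  show ?thesis unfolding e1 e2
    by (rule c_rec_aux) (use dfact_pos[of "2*n"] in auto)
qed

lemma step_aux:
  fixes n :: nat and c p :: real
  shows "(1 - real (2*n)) * (real (2*n)^2 - 4*p^2) * c / (4 * (real (2*n) + 2) * pi^2)
     = (1 / pi^2) * ((2 * real n - 1) / (2 * (real n + 1))) * (p^2 - (real n)^2) * c"
proof -
  have h1: "(1 - real (2*n)) * (real (2*n)^2 - 4*p^2) = 4 * ((2 * real n - 1) * (p^2 - (real n)^2))"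
    by (simp add: algebra_simps power2_eq_square)
  have h2: "4 * (real (2*n) + 2) * pi^2 = 4 * (pi^2 * (2 * (real n + 1)))" by simp
  have g: "\<And>a b q c x :: real. x \<noteq> 0 \<Longrightarrow> 4*(a*q)*c/(4*(x*b)) = (1/x)*(a/b)*q*c"
    by (simp add: field_simps)
  show ?thesis unfolding h1 h2 by (rule g) simp
qed

lemma sol_form:
  assumes "formal_solution p d" and "n \<ge> 1"
  shows "d (2 * n - 1) = 0 \<and> d (2 * n) = c_even p n"
  using assms(2)
proof (induction n rule: nat_induct_at_least)
  case base then show ?case using sol_rec[OF assms(1)] by (simp add: c_even_def)
next
  case (Suc n)
  have a: "2 * Suc n - 1 = (2*n-1)+2" using Suc by simp
  have b: "2 * Suc n = 2*n+2" by simp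
  have o: "d (2 * Suc n - 1) = 0"
    unfolding a using sol_rec(3)[OF assms(1), of "2*n-1"] Suc by simp
  have e: "d (2 * Suc n) = c_even p (n+1)"
  proof -
    have r: "d (2*n+2) = (1-real (2*n))*(real (2*n)^2-4*p^2)*d (2*n)/(4*(real (2*n)+2)*pi^2)"
      by (rule sol_rec(3)[OF assms(1)]) (use Suc in simp)
    show ?thesis unfolding b r step_aux c_rec[OF Suc(1)] using Suc(2) by simp
  qed
  show ?case using o e by simp
qed

theorem proposition2p4:
  fixes p :: real
  shows "(\<exists>d. formal_solution p d)
    \<and> (\<forall>d d'. formal_solution p d \<longrightarrow> formal_solution p d' \<longrightarrow> (\<forall>n\<ge>1. d n = d' n))
    \<and> (\<forall>d. formal_solution p d \<longrightarrow>
          (\<forall>n\<ge>1. d (2 * n - 1) = 0 \<and> d (2 * n) = c_even p n))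
    \<and> (\<forall>n\<ge>1. c_even p (n + 1) = (1 / pi^2) * ((2 * real n - 1) / (2 * (real n + 1)))
                                   * (p^2 - (real n)^2) * c_even p n)
    \<and> (\<forall>m::nat. p = real m \<longrightarrow> (\<forall>n>m. c_even p n = 0))"
proof (intro conjI)
  show "\<exists>d. formal_solution p d" using dd_sol by blast
  show "\<forall>d d'. formal_solution p d \<longrightarrow> formal_solution p d' \<longrightarrow> (\<forall>n\<ge>1. d n = d' n)"
  proof (intro allI impI)
    fix d d' :: "nat \<Rightarrow> real" and n :: nat
    assume h: "formal_solution p d" "formal_solution p d'" "n \<ge> 1"
    define k where "k = (n+1) div 2"
    have k: "k \<ge> 1" "n = 2*k - 1 \<or> n = 2*k" using h(3) unfolding k_def by presburger+
    show "d n = d' n" using sol_form[OF h(1) k(1)] sol_form[OF h(2) k(1)] k(2) by auto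
  qed
  show "\<forall>d. formal_solution p d \<longrightarrow> (\<forall>n\<ge>1. d (2 * n - 1) = 0 \<and> d (2 * n) = c_even p n)"
    using sol_form by blast
  show "\<forall>n\<ge>1. c_even p (n + 1) = (1 / pi^2) * ((2 * real n - 1) / (2 * (real n + 1)))
                                   * (p^2 - (real n)^2) * c_even p n"
    using c_rec by blast
  show "\<forall>m::nat. p = real m \<longrightarrow> (\<forall>n>m. c_even p n = 0)"
  proof (intro allI impI)
    fix m n :: nat assume h: "p = real m" "n > m"
    have "(\<Prod>l<n. p^2 - (real l)^2) = 0"
      using h by (intro prod_zero) auto
    then show "c_even p n = 0" using h by (simp add: c_even_def)
  qed
qed

end
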